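(* Let $f(\mathbf z)$ be a holomorphic function of $n$ variables defined near the origin, let $a,b$ be non-negative integers with $a>b\ge0$ (respectively $0\le a<b$), and let $g(\mathbf w,\bar{\mathbf w})=f(w_1^a\bar w_1^b,\dots,w_n^a\bar w_n^b)$. Then $g$ is holomorphic-like (respectively anti-holomorphic-like) in a neighborhood of the origin, i.e. there is a neighborhood $U$ of the origin such that $C_g(\mathbf w,\bar{\mathbf w})\ge0$ (respectively $\le 0$) for all $\mathbf w\in g^{-1}(0)\cap U$.
   Context: For a mixed function $g(\mathbf w,\bar{\mathbf w})$ write $g_{w_j}=\partial g/\partial w_j$, $g_{\bar w_j}=\partial g/\partial\bar w_j$, and set $C_{j,k}=|w_j\overline{g_{w_k}}-w_k\overline{g_{w_j}}|^2-|w_jg_{\bar w_k}-w_kg_{\bar w_j}|^2$, $C_g(\mathbf w,\bar{\mathbf w})=\sum_{1\le j<k\le n}C_{j,k}$. The paper calls a mixed function with an isolated mixed singularity at the origin holomorphic-like (resp. anti-holomorphic-like) on a neighborhood $U$ of $0$ if $C_g\ge0$ (resp. $\le0$) at every point of $g^{-1}(0)\cap U$. *)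

theory Defs
  imports "HOL-Analysis.Analysis"
begin

text \<open>Points of C^n are vectors in complex^'n; the index type is finite and
linearly ordered so that the sum over pairs j < k makes sense.\<close>

definition holomorphic_vec_on :: "(complex^'n \<Rightarrow> complex) \<Rightarrow> (complex^'n) set \<Rightarrow> bool" where
  "holomorphic_vec_on f S \<longleftrightarrow>
     (\<forall>z\<in>S. \<exists>L. (f has_derivative L) (at z) \<and> (\<forall>c v. L (c *s v) = c * L v))"

text \<open>Real partial derivatives d/dx_j, d/dy_j (w_j = x_j + i y_j) and
Wirtinger derivatives of a mixed function g at w.\<close>
definition dx :: "(complex^'n \<Rightarrow> complex) \<Rightarrow> complex^'n \<Rightarrow> 'n \<Rightarrow> complex" where
  "dx g w j = frechet_derivative g (at w) (axis j 1)"

definition dy :: "(complex^'n \<Rightarrow> complex) \<Rightarrow> complex^'n \<Rightarrow> 'n \<Rightarrow> complex" where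
  "dy g w j = frechet_derivative g (at w) (axis j \<i>)"

definition wirt_w :: "(complex^'n \<Rightarrow> complex) \<Rightarrow> complex^'n \<Rightarrow> 'n \<Rightarrow> complex" where
  "wirt_w g w j = (dx g w j - \<i> * dy g w j) / 2"

definition wirt_wbar :: "(complex^'n \<Rightarrow> complex) \<Rightarrow> complex^'n \<Rightarrow> 'n \<Rightarrow> complex" where
  "wirt_wbar g w j = (dx g w j + \<i> * dy g w j) / 2"

definition C_jk :: "(complex^'n \<Rightarrow> complex) \<Rightarrow> complex^'n \<Rightarrow> 'n \<Rightarrow> 'n \<Rightarrow> real" where
  "C_jk g w j k =
     (cmod (w$j * cnj (wirt_w g w k) - w$k * cnj (wirt_w g w j)))\<^sup>2
   - (cmod (w$j * wirt_wbar g w k - w$k * wirt_wbar g w j))\<^sup>2"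

definition C_g :: "(complex^('n::{finite,linorder}) \<Rightarrow> complex) \<Rightarrow> complex^('n::{finite,linorder}) \<Rightarrow> real" where
  "C_g g w = (\<Sum>j\<in>UNIV. \<Sum>k\<in>{k. j < k}. C_jk g w j k)"

definition mixed_pullback :: "(complex^'n \<Rightarrow> complex) \<Rightarrow> nat \<Rightarrow> nat \<Rightarrow> complex^'n \<Rightarrow> complex" where
  "mixed_pullback f a b w = f (\<chi> j. w$j ^ a * cnj (w$j) ^ b)"

end

theory Submission
  imports Defs
begin


lemma has_derivative_vec_lambda_at:
  fixes F :: "complex^'n \<Rightarrow> 'm::finite \<Rightarrow> complex"
  assumes d: "\<And>i. ((\<lambda>x. F x i) has_derivative D i) (at w)"
  shows "((\<lambda>x. \<chi> i. F x i) has_derivative (\<lambda>v. \<chi> i. D i v)) (at w)"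
proof -
  have lin: "linear (D i)" for i using d[of i] has_derivative_linear by blast
  have "linear (\<lambda>v. \<chi> i. D i v)"
    using lin by (auto simp: linear_iff vec_eq_iff)
  then have bl: "bounded_linear (\<lambda>v. \<chi> i. D i v)"
    by (simp add: linear_conv_bounded_linear)
  have t: "((\<lambda>y. (1 / norm(y - w)) *\<^sub>R (F y i - (F w i + D i (y - w)))) \<longlongrightarrow> 0) (at w)" for i
    using d[of i] unfolding has_derivative_within[where s=UNIV] by simp
  show ?thesis
    unfolding has_derivative_within[where s=UNIV]
    using bl by (auto intro!: vec_tendstoI simp: t)
qed


lemma comp_deriv:
  fixes w :: "complex^'n"
  shows "((\<lambda>x. x$j ^ a * cnj (x$j) ^ b) has_derivative
     (\<lambda>v. (of_nat a * w$j^(a-1) * cnj (w$j)^b) * v$j + (of_nat b * w$j^a * cnj (w$j)^(b-1)) * cnj (v$j))) (at w)"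
proof -
  have h1: "((\<lambda>x. x$j) has_derivative (\<lambda>v. v$j)) (at w)"
    by (rule bounded_linear_imp_has_derivative) (rule bounded_linear_vec_nth)
  have h2: "((\<lambda>x. cnj (x$j)) has_derivative (\<lambda>v. cnj (v$j))) (at w)"
    by (rule bounded_linear_imp_has_derivative, rule bounded_linear_compose[OF bounded_linear_cnj], rule bounded_linear_vec_nth)
  show ?thesis
    apply (rule has_derivative_eq_rhs, rule has_derivative_mult[OF has_derivative_power[OF h1] has_derivative_power[OF h2]])
    apply (rule ext)
    by (simp add: mult_ac add.commute)
qed

lemma key:
  fixes x y p q :: complex
  assumes "a \<ge> 1" "b \<ge> 1"
  shows "(cmod (x * cnj ((of_nat a * y^(a-1) * cnj y^b) * q) - y * cnj ((of_nat a * x^(a-1) * cnj x^b) * p)))\<^sup>2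
       - (cmod (x * ((of_nat b * y^a * cnj y^(b-1)) * q) - y * ((of_nat b * x^a * cnj x^(b-1)) * p)))\<^sup>2
       = (real a ^ 2 - real b ^ 2) * (cmod x * cmod y * cmod (y^(a-1) * cnj y^(b-1) * q - x^(a-1) * cnj x^(b-1) * p))\<^sup>2"
proof -
  obtain a' where a: "a = Suc a'" using assms by (cases a) auto
  obtain b' where b: "b = Suc b'" using assms by (cases b) auto
  note ab = a b
  define d where "d = y^a' * cnj y^b' * q - x^a' * cnj x^b' * p"
  have e1: "x * cnj ((of_nat a * y^(a-1) * cnj y^b) * q) - y * cnj ((of_nat a * x^(a-1) * cnj x^b) * p)
      = of_nat a * x * y * cnj d"
    unfolding d_def ab by (simp add: right_diff_distrib mult_ac)
  have e2: "x * ((of_nat b * y^a * cnj y^(b-1)) * q) - y * ((of_nat b * x^a * cnj x^(b-1)) * p)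
      = of_nat b * x * y * d"
    unfolding d_def ab by (simp add: right_diff_distrib mult_ac)
  have n1: "cmod (of_nat a * x * y * cnj d) = real a * (cmod x * cmod y * cmod d)"
    by (simp add: norm_mult)
  have n2: "cmod (of_nat b * x * y * d) = real b * (cmod x * cmod y * cmod d)"
    by (simp add: norm_mult)
  have "d = y^(a-1) * cnj y^(b-1) * q - x^(a-1) * cnj x^(b-1) * p" unfolding d_def ab by simp
  then show ?thesis unfolding e1 e2 n1 n2
    by (simp only: power_mult_distrib left_diff_distrib)
qed


definition hmap :: "nat \<Rightarrow> nat \<Rightarrow> complex^'n \<Rightarrow> complex^'n" where
  "hmap a b w = (\<chi> j. w$j ^ a * cnj (w$j) ^ b)"

definition AA :: "nat \<Rightarrow> nat \<Rightarrow> complex \<Rightarrow> complex" where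
  "AA a b x = of_nat a * x^(a-1) * cnj x^b"
definition BB :: "nat \<Rightarrow> nat \<Rightarrow> complex \<Rightarrow> complex" where
  "BB a b x = of_nat b * x^a * cnj x^(b-1)"

lemma hder: "(hmap a b has_derivative (\<lambda>v. \<chi> i. AA a b (w$i) * v$i + BB a b (w$i) * cnj (v$i))) (at w)"
proof -
  have "((\<lambda>x. \<chi> j. x$j ^ a * cnj (x$j) ^ b) has_derivative (\<lambda>v. \<chi> j. AA a b (w$j) * v$j + BB a b (w$j) * cnj (v$j))) (at w)"
    by (rule has_derivative_vec_lambda_at, unfold AA_def BB_def, rule comp_deriv)
  then show ?thesis by (simp add: hmap_def[abs_def])
qed

lemma wirt:
  fixes f :: "complex^'n \<Rightarrow> complex"
  assumes L: "(f has_derivative L) (at (hmap a b w))" and cl: "\<forall>c v. L (c *s v) = c * L v"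
  shows "wirt_w (mixed_pullback f a b) w j = AA a b (w$j) * L (axis j 1)"
    and "wirt_wbar (mixed_pullback f a b) w j = BB a b (w$j) * L (axis j 1)"
proof -
  have mp: "mixed_pullback f a b = (\<lambda>x. f (hmap a b x))"
    by (simp add: fun_eq_iff mixed_pullback_def hmap_def)
  have "(mixed_pullback f a b has_derivative (\<lambda>v. L (\<chi> i. AA a b (w$i) * v$i + BB a b (w$i) * cnj (v$i)))) (at w)"
    unfolding mp by (rule has_derivative_compose[OF hder L])
  then have fd: "frechet_derivative (mixed_pullback f a b) (at w) = (\<lambda>v. L (\<chi> i. AA a b (w$i) * v$i + BB a b (w$i) * cnj (v$i)))"
    by (simp add: frechet_derivative_at[symmetric])
  have ax: "L (axis j c) = c * L (axis j 1)" for c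
  proof -
    have "axis j c = c *s axis j (1::complex)" by (simp add: vec_eq_iff axis_def)
    then show ?thesis using cl by simp
  qed
  have v1: "(\<chi> i. AA a b (w$i) * axis j 1 $ i + BB a b (w$i) * cnj (axis j 1 $ i)) = axis j (AA a b (w$j) + BB a b (w$j))"
    by (simp add: vec_eq_iff axis_def)
  have v2: "(\<chi> i. AA a b (w$i) * axis j \<i> $ i + BB a b (w$i) * cnj (axis j \<i> $ i)) = axis j (\<i> * (AA a b (w$j) - BB a b (w$j)))"
    by (simp add: vec_eq_iff axis_def algebra_simps)
  have dxe: "dx (mixed_pullback f a b) w j = (AA a b (w$j) + BB a b (w$j)) * L (axis j 1)"
    using ax[of "AA a b (w$j) + BB a b (w$j)"] by (simp only: dx_def fd v1)
  have dye: "dy (mixed_pullback f a b) w j = (\<i> * (AA a b (w$j) - BB a b (w$j))) * L (axis j 1)"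
    using ax[of "\<i> * (AA a b (w$j) - BB a b (w$j))"] by (simp only: dy_def fd v2)
  show "wirt_w (mixed_pullback f a b) w j = AA a b (w$j) * L (axis j 1)"
    unfolding wirt_w_def dxe dye by (simp add: algebra_simps)
  show "wirt_wbar (mixed_pullback f a b) w j = BB a b (w$j) * L (axis j 1)"
    unfolding wirt_wbar_def dxe dye by (simp add: algebra_simps)
qed

lemma Cjk_eq:
  fixes f :: "complex^'n \<Rightarrow> complex"
  assumes L: "(f has_derivative L) (at (hmap a b w))" and cl: "\<forall>c v. L (c *s v) = c * L v"
  shows "C_jk (mixed_pullback f a b) w j k =
    (cmod (w$j * cnj (AA a b (w$k) * L (axis k 1)) - w$k * cnj (AA a b (w$j) * L (axis j 1))))\<^sup>2
  - (cmod (w$j * (BB a b (w$k) * L (axis k 1)) - w$k * (BB a b (w$j) * L (axis j 1))))\<^sup>2"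
  unfolding C_jk_def wirt[OF L cl] ..

lemma Cjk_pos:
  fixes f :: "complex^'n \<Rightarrow> complex"
  assumes L: "(f has_derivative L) (at (hmap a b w))" and cl: "\<forall>c v. L (c *s v) = c * L v"
    and ab: "b < a"
  shows "C_jk (mixed_pullback f a b) w j k \<ge> 0"
proof (cases "b = 0")
  case True
  then show ?thesis unfolding Cjk_eq[OF L cl] by (simp add: BB_def)
next
  case False
  then have "a \<ge> 1" "b \<ge> 1" using ab by auto
  note k = key[OF this, of "w$j" "w$k" "L (axis k 1)" "L (axis j 1)"]
  have "real a ^ 2 - real b ^ 2 \<ge> 0" using ab by (simp add: power_mono)
  then show ?thesis unfolding Cjk_eq[OF L cl] AA_def BB_def k by simp
qed

lemma Cjk_neg:
  fixes f :: "complex^'n \<Rightarrow> complex"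
  assumes L: "(f has_derivative L) (at (hmap a b w))" and cl: "\<forall>c v. L (c *s v) = c * L v"
    and ab: "a < b"
  shows "C_jk (mixed_pullback f a b) w j k \<le> 0"
proof (cases "a = 0")
  case True
  then show ?thesis unfolding Cjk_eq[OF L cl] by (simp add: AA_def)
next
  case False
  then have "a \<ge> 1" "b \<ge> 1" using ab by auto
  note k = key[OF this, of "w$j" "w$k" "L (axis k 1)" "L (axis j 1)"]
  have "real a ^ 2 - real b ^ 2 \<le> 0" using ab by (simp add: power_mono)
  then show ?thesis unfolding Cjk_eq[OF L cl] AA_def BB_def k
    by (simp add: mult_nonpos_nonneg)
qed

theorem lemma12:
  fixes f :: "complex^'n::{finite,linorder} \<Rightarrow> complex" and a b :: nat and r :: real
  assumes "r > 0" and "holomorphic_vec_on f (ball 0 r)"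
  shows "(b < a \<longrightarrow> (\<exists>U. open U \<and> 0 \<in> U \<and>
            (\<forall>w\<in>U. mixed_pullback f a b w = 0 \<longrightarrow> C_g (mixed_pullback f a b) w \<ge> 0)))
       \<and> (a < b \<longrightarrow> (\<exists>U. open U \<and> 0 \<in> U \<and>
            (\<forall>w\<in>U. mixed_pullback f a b w = 0 \<longrightarrow> C_g (mixed_pullback f a b) w \<le> 0)))"
proof -
  define U where "U = (hmap a b :: complex^'n::{finite,linorder} \<Rightarrow> _) -` ball 0 r"
  have cont: "continuous_on UNIV (hmap a b :: complex^'n::{finite,linorder} \<Rightarrow> _)"
    by (rule continuous_at_imp_continuous_on, auto intro: has_derivative_continuous[OF hder])
  have oU: "open U" unfolding U_def by (rule open_vimage[OF open_ball cont])
  have Lex: "\<exists>L. (f has_derivative L) (at (hmap a b w)) \<and> (\<forall>c v. L (c *s v) = c * L v)" if "w \<in> U" for w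
    using assms(2) that unfolding holomorphic_vec_on_def U_def by auto
  have h0: "a \<noteq> b \<Longrightarrow> hmap a b (0::complex^'n::{finite,linorder}) = 0"
    by (simp add: hmap_def vec_eq_iff power_0_left)
  have z: "a \<noteq> b \<Longrightarrow> (0::complex^'n::{finite,linorder}) \<in> U" unfolding U_def using h0 assms(1) by simp
  show ?thesis
  proof (intro conjI impI)
    assume ab: "b < a"
    show "\<exists>U. open U \<and> 0 \<in> U \<and> (\<forall>w\<in>U. mixed_pullback f a b w = 0 \<longrightarrow> C_g (mixed_pullback f a b) w \<ge> 0)"
    proof (intro exI conjI ballI impI)
      show "open U" by (rule oU)
      show "0 \<in> U" using z ab by simp
      fix w assume "w \<in> U"
      then obtain L where L: "(f has_derivative L) (at (hmap a b w))" "\<forall>c v. L (c *s v) = c * L v"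
        using Lex by blast
      show "C_g (mixed_pullback f a b) w \<ge> 0" unfolding C_g_def
        by (intro sum_nonneg Cjk_pos[OF L ab])
    qed
  next
    assume ab: "a < b"
    show "\<exists>U. open U \<and> 0 \<in> U \<and> (\<forall>w\<in>U. mixed_pullback f a b w = 0 \<longrightarrow> C_g (mixed_pullback f a b) w \<le> 0)"
    proof (intro exI conjI ballI impI)
      show "open U" by (rule oU)
      show "0 \<in> U" using z ab by simp
      fix w assume "w \<in> U"
      then obtain L where L: "(f has_derivative L) (at (hmap a b w))" "\<forall>c v. L (c *s v) = c * L v"
        using Lex by blast
      show "C_g (mixed_pullback f a b) w \<le> 0" unfolding C_g_def
        by (intro sum_nonpos Cjk_neg[OF L ab])
    qed
  qed
qed

end
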